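(* For every integer $n\ge1$, every $\beta\in[\tfrac12,1]$ and every $x\in\mathbb{R}^n$ with $|x_1|\ge|x_2|\ge\dots\ge|x_n|$, $$\sum_{i=1}^n|x_i|^{\frac{2-\beta}{\beta}}\left(i+\sum_{j>i}\frac{|x_j|}{|x_i|}\right)\le n^\beta\cdot\left(\sum_{i=1}^n|x_i|^{\frac1\beta}\right)^{2-\beta},$$ with equality for $x=c\mathbf{1}$ for any $c\neq0$. *)

theory Defs
  imports Complex_Main
begin

end

theory Submission imports Defs "HOL-Analysis.Convex" begin
lemma pair:
  fixes u v r :: real
  assumes "0 \<le> v" "v \<le> u" "0 \<le> r" "r \<le> 1"
  shows "u powr (2*r) * v + v powr (2*r+1) \<le> u powr r * v powr (r+1) + v powr r * u powr (r+1)"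
proof (cases "v = 0")
  case True then show ?thesis by simp
next
  case False
  then have v: "v > 0" using assms by simp
  then have u: "u > 0" using assms by simp
  have 1: "v powr (2*r+1) \<le> u powr r * v powr (r+1)"
  proof -
    have "v powr (2*r+1) = v powr r * v powr (r+1)" by (simp flip: powr_add add: algebra_simps)
    also have "\<dots> \<le> u powr r * v powr (r+1)"
      by (rule mult_right_mono) (use assms in \<open>auto intro: powr_mono2\<close>)
    finally show ?thesis .
  qed
  have 2: "u powr r * v \<le> v powr r * u"
  proof -
    have "u powr r * v = u powr r * v powr (1-r) * v powr r"
      using v by (simp add: mult.assoc flip: powr_add)
    also have "\<dots> \<le> u powr r * u powr (1-r) * v powr r"
      by (intro mult_right_mono mult_left_mono powr_mono2) (use assms in auto)
    also have "\<dots> = v powr r * u" using u by (simp flip: powr_add)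
    finally show ?thesis .
  qed
  have "u powr (2*r) * v = u powr r * (u powr r * v)" by (simp add: mult.assoc flip: powr_add)
  also have "\<dots> \<le> u powr r * (v powr r * u)" by (rule mult_left_mono[OF 2]) simp
  also have "\<dots> = v powr r * u powr (r+1)" using u by (simp add: powr_add)
  finally show ?thesis using 1 by linarith
qed

lemma powsum:
  fixes y :: "nat \<Rightarrow> real" and g :: real
  assumes "finite I" "card I > 0" "\<And>i. i \<in> I \<Longrightarrow> 0 \<le> y i" "0 \<le> g" "g \<le> 1"
  shows "(\<Sum>i\<in>I. y i powr g) \<le> real (card I) powr (1-g) * (\<Sum>i\<in>I. y i) powr g"
proof (cases "(\<Sum>i\<in>I. y i) = 0")
  case True
  then have "\<forall>i\<in>I. y i = 0" using sum_nonneg_eq_0_iff[OF assms(1)] assms(3) by blast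
  then show ?thesis by simp
next
  case False
  define S where "S = (\<Sum>i\<in>I. y i)"
  define N where "N = real (card I)"
  have S: "S > 0" using False assms(3) sum_nonneg[of I y] unfolding S_def by force
  have N: "N > 0" using assms N_def by simp
  define m where "m = S / N"
  have m: "m > 0" using S N m_def by simp
  have each: "y i powr g * m powr (1-g) \<le> g * y i + (1-g) * m" if "i \<in> I" for i
  proof (cases "y i = 0")
    case True then show ?thesis using m assms by simp
  next
    case False
    then have "y i > 0" using assms(3) that by force
    then show ?thesis using Youngs_inequality_0[of g "1-g" "y i" m] m assms by simp
  qed
  have "(\<Sum>i\<in>I. y i powr g) * m powr (1-g) = (\<Sum>i\<in>I. y i powr g * m powr (1-g))"
    by (simp add: sum_distrib_right)
  also have "\<dots> \<le> (\<Sum>i\<in>I. g * y i + (1-g) * m)" by (rule sum_mono) (rule each)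
  also have "\<dots> = g * S + (1-g) * N * m" by (simp add: sum.distrib sum_distrib_left S_def N_def)
  also have "\<dots> = S" using N by (simp add: m_def algebra_simps)
  finally have A: "(\<Sum>i\<in>I. y i powr g) * m powr (1-g) \<le> S" .
  have mp: "m powr (1-g) > 0" using m by simp
  have "(\<Sum>i\<in>I. y i powr g) \<le> S / m powr (1-g)" using A mp by (simp add: field_simps)
  also have "S / m powr (1-g) = N powr (1-g) * S powr g"
  proof -
    have "S / m powr (1-g) = S * (N powr (1-g) / S powr (1-g))"
      using S N by (simp add: m_def powr_divide)
    also have "\<dots> = N powr (1-g) * (S powr 1 / S powr (1-g))" using S by simp
    also have "S powr 1 / S powr (1-g) = S powr g" using S powr_diff[of S 1 "1-g"] by simp
    finally show ?thesis .
  qed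
  finally show ?thesis unfolding S_def N_def .
qed

theorem lemma2:
  fixes n :: nat and \<beta> :: real and x :: "nat \<Rightarrow> real"
  assumes "n \<ge> 1"
    and "1/2 \<le> \<beta>" and "\<beta> \<le> 1"
    and "\<And>i j. 1 \<le> i \<Longrightarrow> i \<le> j \<Longrightarrow> j \<le> n \<Longrightarrow> \<bar>x j\<bar> \<le> \<bar>x i\<bar>"
  shows "(\<Sum>i=1..n. \<bar>x i\<bar> powr ((2 - \<beta>) / \<beta>) * (real i + (\<Sum>j\<in>{i<..n}. \<bar>x j\<bar> / \<bar>x i\<bar>)))
           \<le> real n powr \<beta> * (\<Sum>i=1..n. \<bar>x i\<bar> powr (1 / \<beta>)) powr (2 - \<beta>)
    \<and> (\<forall>c::real. c \<noteq> 0 \<longrightarrow>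
           (\<Sum>i=1..n. \<bar>c\<bar> powr ((2 - \<beta>) / \<beta>) * (real i + (\<Sum>j\<in>{i<..n}. \<bar>c\<bar> / \<bar>c\<bar>)))
           = real n powr \<beta> * (\<Sum>i=1..n. \<bar>c\<bar> powr (1 / \<beta>)) powr (2 - \<beta>))"
proof
  have b0: "\<beta> > 0" using assms by simp
  define a where "a i = \<bar>x i\<bar>" for i
  define r where "r = (1 - \<beta>) / \<beta>"
  have r0: "0 \<le> r" and r1: "r \<le> 1" using assms b0 by (auto simp: r_def field_simps)
  have e1: "(2 - \<beta>) / \<beta> = 2*r+1" using b0 by (simp add: r_def field_simps)
  have e2: "1 / \<beta> = r+1" using b0 by (simp add: r_def field_simps)
  have a0: "0 \<le> a i" for i by (simp add: a_def)
  define L where "L i j = (if j \<le> i then a i powr (2*r+1) else a i powr (2*r) * a j)" for i j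
  define R where "R i j = a i powr r * a j powr (r+1)" for i j
  define S where "S = (\<Sum>i=1..n. a i powr (r+1))"
  have S0: "S \<ge> 0" unfolding S_def by (intro sum_nonneg) simp
  have lhs: "a i powr (2*r+1) * (real i + (\<Sum>j\<in>{i<..n}. a j / a i)) = (\<Sum>j=1..n. L i j)"
    if "i \<in> {1..n}" for i
  proof -
    have s1: "{1..n} \<inter> {j. j \<le> i} = {1..i}" using that by auto
    have s2: "{1..n} \<inter> - {j. j \<le> i} = {i<..n}" using that by auto
    have "(\<Sum>j=1..n. L i j) = (\<Sum>j\<in>{1..i}. a i powr (2*r+1)) + (\<Sum>j\<in>{i<..n}. a i powr (2*r) * a j)"
      unfolding L_def sum.If_cases[OF finite_atLeastAtMost] s1 s2 by simp
    also have "(\<Sum>j\<in>{i<..n}. a i powr (2*r) * a j) = (\<Sum>j\<in>{i<..n}. a i powr (2*r+1) * (a j / a i))"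
    proof (rule sum.cong)
      fix j show "a i powr (2*r) * a j = a i powr (2*r+1) * (a j / a i)"
      proof (cases "a i = 0")
        case False
        then have "a i > 0" using a0[of i] by simp
        then show ?thesis by (simp add: powr_add)
      qed simp
    qed simp
    finally show ?thesis by (simp add: sum_distrib_left distrib_left)
  qed
  have "(\<Sum>i=1..n. \<bar>x i\<bar> powr ((2 - \<beta>) / \<beta>) * (real i + (\<Sum>j\<in>{i<..n}. \<bar>x j\<bar> / \<bar>x i\<bar>)))
      = (\<Sum>i=1..n. \<Sum>j=1..n. L i j)"
    unfolding e1 a_def[symmetric] by (rule sum.cong) (simp_all add: lhs)
  also have "\<dots> \<le> (\<Sum>i=1..n. \<Sum>j=1..n. R i j)"
  proof -
    have pw: "L i j + L j i \<le> R i j + R j i" if "i \<in> {1..n}" "j \<in> {1..n}" for i j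
    proof -
      consider "i < j" | "i = j" | "j < i" by linarith
      then show ?thesis
      proof cases
        case 1
        have "a j \<le> a i" unfolding a_def using assms(4)[of i j] that 1 by auto
        then show ?thesis using pair[of "a j" "a i" r] 1 a0 r0 r1 by (simp add: L_def R_def)
      next
        case 2
        then show ?thesis by (simp add: L_def R_def algebra_simps flip: powr_add)
      next
        case 3
        have "a i \<le> a j" unfolding a_def using assms(4)[of j i] that 3 by auto
        then show ?thesis using pair[of "a i" "a j" r] 3 a0 r0 r1 by (simp add: L_def R_def algebra_simps)
      qed
    qed
    have "2 * (\<Sum>i=1..n. \<Sum>j=1..n. L i j) = (\<Sum>i=1..n. \<Sum>j=1..n. L i j + L j i)"
      by (simp add: sum.distrib sum.swap[of "\<lambda>i j. L j i"])
    also have "\<dots> \<le> (\<Sum>i=1..n. \<Sum>j=1..n. R i j + R j i)"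
      by (intro sum_mono pw)
    also have "\<dots> = 2 * (\<Sum>i=1..n. \<Sum>j=1..n. R i j)"
      by (simp add: sum.distrib sum.swap[of "\<lambda>i j. R j i"])
    finally show ?thesis by simp
  qed
  also have "\<dots> = (\<Sum>i=1..n. a i powr r) * S"
    by (simp add: R_def S_def sum_product)
  also have "\<dots> \<le> (real n powr \<beta> * S powr (1 - \<beta>)) * S"
  proof (rule mult_right_mono[OF _ S0])
    have "(\<Sum>i=1..n. a i powr r) = (\<Sum>i=1..n. (a i powr (r+1)) powr (1-\<beta>))"
      using b0 by (intro sum.cong) (simp_all add: powr_powr r_def field_simps)
    also have "\<dots> \<le> real (card {1..n}) powr (1-(1-\<beta>)) * (\<Sum>i=1..n. a i powr (r+1)) powr (1-\<beta>)"
      by (rule powsum) (use assms in auto)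
    finally show "(\<Sum>i=1..n. a i powr r) \<le> real n powr \<beta> * S powr (1 - \<beta>)" by (simp add: S_def)
  qed
  also have "\<dots> = real n powr \<beta> * S powr (2 - \<beta>)"
  proof (cases "S = 0")
    case False
    then have "S > 0" using S0 by simp
    then show ?thesis using powr_add[of S "1-\<beta>" 1] by simp
  qed simp
  finally show "(\<Sum>i=1..n. \<bar>x i\<bar> powr ((2 - \<beta>) / \<beta>) * (real i + (\<Sum>j\<in>{i<..n}. \<bar>x j\<bar> / \<bar>x i\<bar>)))
           \<le> real n powr \<beta> * (\<Sum>i=1..n. \<bar>x i\<bar> powr (1 / \<beta>)) powr (2 - \<beta>)"
    unfolding S_def e2 a_def .
next
  show "\<forall>c::real. c \<noteq> 0 \<longrightarrow>
           (\<Sum>i=1..n. \<bar>c\<bar> powr ((2 - \<beta>) / \<beta>) * (real i + (\<Sum>j\<in>{i<..n}. \<bar>c\<bar> / \<bar>c\<bar>)))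
           = real n powr \<beta> * (\<Sum>i=1..n. \<bar>c\<bar> powr (1 / \<beta>)) powr (2 - \<beta>)"
  proof (intro allI impI)
    fix c :: real assume c: "c \<noteq> 0"
    have b0: "\<beta> > 0" using assms by simp
    have n0: "real n > 0" using assms by simp
    have "(\<Sum>i=1..n. \<bar>c\<bar> powr ((2 - \<beta>) / \<beta>) * (real i + (\<Sum>j\<in>{i<..n}. \<bar>c\<bar> / \<bar>c\<bar>)))
        = (\<Sum>i=1..n. \<bar>c\<bar> powr ((2 - \<beta>) / \<beta>) * real n)"
      using c by (intro sum.cong) auto
    also have "\<dots> = real n powr 2 * \<bar>c\<bar> powr ((2 - \<beta>) / \<beta>)"
      using n0 by (simp add: power2_eq_square)
    also have "\<dots> = real n powr \<beta> * (real n * \<bar>c\<bar> powr (1 / \<beta>)) powr (2 - \<beta>)"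
      using n0 c b0 by (simp add: powr_mult powr_powr flip: powr_add)
    finally show "(\<Sum>i=1..n. \<bar>c\<bar> powr ((2 - \<beta>) / \<beta>) * (real i + (\<Sum>j\<in>{i<..n}. \<bar>c\<bar> / \<bar>c\<bar>)))
           = real n powr \<beta> * (\<Sum>i=1..n. \<bar>c\<bar> powr (1 / \<beta>)) powr (2 - \<beta>)" by simp
  qed
qed
end
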